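(* Define, as formal power series in $q$ with coefficients polynomial in $a$ (or as analytic functions for $|q|<1$), $$F_1(a)=\sum_{n\ge0}\frac{a^{2n}q^{2n(n+1)}(q;q^2)_n(-aq^{2n+2};q)_\infty}{(q^2;q^2)_n},\quad F_2(a)=(-aq;q)_\infty,\quad F_3(a)=\sum_{n\ge0}\frac{a^{2n}q^{2n^2}(q;q^2)_n(-aq^{2n+1};q)_\infty}{(q^2;q^2)_n}.$$ Then $F_1(a)=F_3(aq)$, $F_2(a)=(1+aq)F_2(aq)$, and $F_3(a)=F_1(a)+aq(1+aq)F_1(aq)$.
   Context: $(x;q)_n=\prod_{h=0}^{n-1}(1-xq^h)$, $(x;q)_0=1$, and $(x;q)_\infty=\prod_{h\ge0}(1-xq^h)$. *)

theory Defs
  imports "HOL-Analysis.Analysis"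
begin

definition qpoch :: "complex \<Rightarrow> complex \<Rightarrow> nat \<Rightarrow> complex" where
  "qpoch x q n = (\<Prod>h<n. 1 - x * q ^ h)"

definition qpoch_inf :: "complex \<Rightarrow> complex \<Rightarrow> complex" where
  "qpoch_inf x q = (\<Prod>h. 1 - x * q ^ h)"

definition F1 :: "complex \<Rightarrow> complex \<Rightarrow> complex" where
  "F1 q a = (\<Sum>n. a ^ (2*n) * q ^ (2*n*(n+1)) * qpoch q (q^2) n
              * qpoch_inf (- a * q ^ (2*n+2)) q / qpoch (q^2) (q^2) n)"

definition F2 :: "complex \<Rightarrow> complex \<Rightarrow> complex" where
  "F2 q a = qpoch_inf (- a * q) q"

definition F3 :: "complex \<Rightarrow> complex \<Rightarrow> complex" where
  "F3 q a = (\<Sum>n. a ^ (2*n) * q ^ (2*n^2) * qpoch q (q^2) n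
              * qpoch_inf (- a * q ^ (2*n+1)) q / qpoch (q^2) (q^2) n)"

end

theory Submission
  imports Defs
begin


lemma qconv:
  fixes q x :: complex assumes "norm q < 1"
  shows "convergent_prod (\<lambda>h. 1 - x * q ^ h)"
proof -
  have "summable (\<lambda>h. norm x * norm q ^ h)"
    using assms by (intro summable_mult summable_geometric) auto
  then have "summable (\<lambda>h. norm ((1 - x * q ^ h) - 1))"
    by (simp add: norm_mult norm_power)
  then show ?thesis
    by (intro abs_convergent_prod_imp_convergent_prod summable_imp_abs_convergent_prod)
qed

lemma Qsplit:
  fixes q x :: complex assumes "norm q < 1"
  shows "qpoch_inf x q = (1 - x) * qpoch_inf (x * q) q"
proof -
  have "(\<lambda>h. 1 - x * q ^ h) has_prod ((\<Prod>k<1. 1 - x * q ^ k) * (\<Prod>k. 1 - x * q ^ (k + 1)))"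
    by (rule has_prod_ignore_initial_segment'[OF qconv[OF assms]])
  then have "qpoch_inf x q = (1 - x) * (\<Prod>k. 1 - x * q ^ (k + 1))"
    unfolding qpoch_inf_def has_prod_iff by simp
  also have "(\<lambda>k. 1 - x * q ^ (k + 1)) = (\<lambda>k. 1 - (x * q) * q ^ k)"
    by (simp add: algebra_simps)
  finally show ?thesis unfolding qpoch_inf_def .
qed

lemma Qbound:
  fixes q x :: complex assumes "norm q < 1"
  shows "norm (qpoch_inf x q) \<le> exp (norm x / (1 - norm q))"
proof -
  have L: "(\<lambda>n. norm (\<Prod>i\<le>n. 1 - x * q ^ i)) \<longlonglongrightarrow> norm (qpoch_inf x q)"
    unfolding qpoch_inf_def by (intro tendsto_norm convergent_prod_LIMSEQ qconv assms)
  have "norm (\<Prod>i\<le>n. 1 - x * q ^ i) \<le> exp (norm x / (1 - norm q))" for n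
  proof -
    have "norm (\<Prod>i\<le>n. 1 - x * q ^ i) = (\<Prod>i\<le>n. norm (1 - x * q ^ i))"
      by (simp add: prod_norm)
    also have "\<dots> \<le> (\<Prod>i\<le>n. exp (norm x * norm q ^ i))"
    proof (intro prod_mono conjI)
      fix i
      have "norm (1 - x * q ^ i) \<le> 1 + norm x * norm q ^ i"
        using norm_triangle_ineq4[of 1 "x * q ^ i"] by (simp add: norm_mult norm_power)
      also have "\<dots> \<le> exp (norm x * norm q ^ i)" by (rule exp_ge_add_one_self)
      finally show "norm (1 - x * q ^ i) \<le> exp (norm x * norm q ^ i)" .
    qed simp
    also have "\<dots> = exp (\<Sum>i\<le>n. norm x * norm q ^ i)" by (simp add: exp_sum)
    also have "(\<Sum>i\<le>n. norm x * norm q ^ i) \<le> (\<Sum>i. norm x * norm q ^ i)"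
      using assms by (intro sum_le_suminf summable_mult summable_geometric) auto
    also have "(\<Sum>i. norm x * norm q ^ i) = norm x / (1 - norm q)"
      using assms by (simp add: suminf_mult suminf_geometric divide_simps)
    finally show ?thesis by simp
  qed
  then show ?thesis using L by (intro LIMSEQ_le_const2[OF L]) auto
qed

lemma qpoch_norm_le:
  fixes q x :: complex assumes "norm q \<le> 1"
  shows "norm (qpoch x q n) \<le> (1 + norm x) ^ n"
proof -
  have "norm (qpoch x q n) = (\<Prod>h<n. norm (1 - x * q ^ h))"
    unfolding qpoch_def by (simp add: prod_norm)
  also have "\<dots> \<le> (\<Prod>h<n. 1 + norm x)"
  proof (intro prod_mono conjI)
    fix h
    have "norm (1 - x * q ^ h) \<le> 1 + norm x * norm q ^ h"
      using norm_triangle_ineq4[of 1 "x * q ^ h"] by (simp add: norm_mult norm_power)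
    also have "norm x * norm q ^ h \<le> norm x * 1"
      using assms by (intro mult_left_mono power_le_one) auto
    finally show "norm (1 - x * q ^ h) \<le> 1 + norm x" by simp
  qed simp
  finally show ?thesis by simp
qed

lemma qpoch2_norm_ge:
  fixes q :: complex assumes "norm q < 1"
  shows "(1 - norm q ^ 2) ^ n \<le> norm (qpoch (q^2) (q^2) n)"
proof -
  have "(1 - norm q ^ 2) ^ n = (\<Prod>h<n. 1 - norm q ^ 2)" by simp
  also have "\<dots> \<le> (\<Prod>h<n. norm (1 - q^2 * (q^2) ^ h))"
  proof (intro prod_mono conjI)
    fix h
    have nq: "norm q ^ 2 < 1" using assms by (simp add: power_less_one_iff)
    then show "0 \<le> 1 - norm q ^ 2" by simp
    have "1 - norm (q^2 * (q^2) ^ h) \<le> norm (1 - q^2 * (q^2) ^ h)"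
      using norm_triangle_ineq2[of 1 "q^2 * (q^2) ^ h"] by simp
    moreover have "norm (q^2 * (q^2) ^ h) \<le> norm q ^ 2"
    proof -
      have "norm (q^2 * (q^2) ^ h) = norm q ^ 2 * (norm q ^ 2) ^ h"
        by (simp add: norm_mult norm_power)
      also have "\<dots> \<le> norm q ^ 2 * 1"
        using nq assms by (intro mult_left_mono power_le_one) (auto simp: less_imp_le)
      finally show ?thesis by simp
    qed
    ultimately show "1 - norm q ^ 2 \<le> norm (1 - q^2 * (q^2) ^ h)" by simp
  qed
  also have "\<dots> = norm (qpoch (q^2) (q^2) n)"
    unfolding qpoch_def by (simp add: prod_norm)
  finally show ?thesis .
qed

lemma qpoch2_nonzero:
  fixes q :: complex assumes "norm q < 1"
  shows "qpoch (q^2) (q^2) n \<noteq> 0"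
proof -
  have "0 < (1 - norm q ^ 2) ^ n"
    using assms by (intro zero_less_power) (simp add: power_less_one_iff)
  then show ?thesis using qpoch2_norm_ge[OF assms, of n] by auto
qed

definition gt :: "complex \<Rightarrow> complex \<Rightarrow> (nat \<Rightarrow> complex) \<Rightarrow> (nat \<Rightarrow> complex) \<Rightarrow> nat \<Rightarrow> complex" where
  "gt q x u c n = x ^ n * q ^ (2*n^2) * u n * qpoch q (q^2) n * qpoch_inf (c n) q / qpoch (q^2) (q^2) n"

lemma gt_bound:
  fixes q x :: complex
  assumes q: "norm q < 1" and u: "\<And>n. norm (u n) \<le> M" and c: "\<And>n. norm (c n) \<le> \<rho>"
    and x: "norm x \<le> X"
  shows "norm (gt q x u c n) \<le> M * exp (\<rho> / (1 - norm q)) * (X / (1 - norm q)) ^ n * norm q ^ (2*n^2)"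
proof -
  have nq: "norm q ^ 2 < 1" using q by (simp add: power_less_one_iff)
  have d: "0 < (1 - norm q ^ 2) ^ n" using nq by simp
  have M0: "0 \<le> M" using u[of 0] norm_ge_zero order_trans by blast
  have "norm (gt q x u c n) = norm x ^ n * norm q ^ (2*n^2) * norm (u n) * norm (qpoch q (q^2) n)
      * norm (qpoch_inf (c n) q) / norm (qpoch (q^2) (q^2) n)"
    unfolding gt_def by (simp add: norm_mult norm_divide norm_power)
  also have "\<dots> \<le> X ^ n * norm q ^ (2*n^2) * M * (1 + norm q) ^ n
      * exp (\<rho> / (1 - norm q)) / (1 - norm q ^ 2) ^ n"
  proof -
    have X0: "0 \<le> X" using x norm_ge_zero order_trans by blast
    have a1: "norm x ^ n \<le> X ^ n" using x by (intro power_mono) auto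
    have a2: "norm (qpoch q (q^2) n) \<le> (1 + norm q) ^ n"
      using qpoch_norm_le[of "q^2" q n] q by (simp add: norm_power power_le_one)
    have a3: "norm (qpoch_inf (c n) q) \<le> exp (\<rho> / (1 - norm q))"
      using Qbound[OF q, of "c n"] c[of n] q
      by (meson divide_right_mono diff_ge_0_iff_ge exp_le_cancel_iff less_imp_le order_trans)
    have "norm x ^ n * norm q ^ (2*n^2) * norm (u n) * norm (qpoch q (q^2) n)
      * norm (qpoch_inf (c n) q) \<le> X ^ n * norm q ^ (2*n^2) * M * (1 + norm q) ^ n
      * exp (\<rho> / (1 - norm q))"
      by (intro mult_mono a1 a2 a3 u order_refl mult_nonneg_nonneg X0 M0 zero_le_power) auto
    then show ?thesis
      by (intro frac_le mult_nonneg_nonneg X0 M0 zero_le_power d qpoch2_norm_ge q) auto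
  qed
  also have "\<dots> = M * exp (\<rho> / (1 - norm q)) * (X / (1 - norm q)) ^ n * norm q ^ (2*n^2)"
  proof -
    have "(1 - norm q ^ 2) = (1 + norm q) * (1 - norm q)" by (simp add: algebra_simps power2_eq_square)
    then have e: "(1 - norm q ^ 2) ^ n = (1 + norm q) ^ n * (1 - norm q) ^ n"
      by (simp add: power_mult_distrib[symmetric])
    moreover have "1 + norm q > 0" "1 - norm q > 0" using q norm_ge_zero[of q] by linarith+
    ultimately show ?thesis by (simp add: power_divide field_simps)
  qed
  finally show ?thesis .
qed

lemma summable_rs:
  fixes r s :: real assumes "0 \<le> r" "0 \<le> s" "s < 1"
  shows "summable (\<lambda>n. C * r ^ n * s ^ (2*n^2))"
proof -
  have "(\<lambda>n. r * (s^2) ^ n) \<longlonglongrightarrow> r * 0"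
    using assms by (intro tendsto_mult tendsto_const LIMSEQ_power_zero) (auto simp: power_less_one_iff)
  then have "eventually (\<lambda>n. r * (s^2) ^ n < 1/2) sequentially"
    by (intro order_tendstoD) auto
  then obtain N where N: "\<And>n. n \<ge> N \<Longrightarrow> r * (s^2) ^ n < 1/2"
    by (auto simp: eventually_sequentially)
  have S: "summable (\<lambda>n. norm C * (1/2::real) ^ n)"
    by (intro summable_mult summable_geometric) auto
  have B: "norm (C * r ^ n * s ^ (2*n^2)) \<le> norm C * (1/2) ^ n" if "n \<ge> N" for n
  proof -
    have "s ^ (2*n^2) = ((s^2)^n)^n"
    proof -
      have "2*n^2 = 2*n*n" by (simp add: power2_eq_square)
      then show ?thesis by (simp only: power_mult)
    qed
    then have "r ^ n * s ^ (2*n^2) = (r * (s^2) ^ n) ^ n"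
      by (simp only: power_mult_distrib)
    also have "\<dots> \<le> (1/2) ^ n"
      using N[OF that] assms by (intro power_mono) auto
    finally have "r ^ n * s ^ (2*n^2) \<le> (1/2) ^ n" .
    then have "norm C * (r ^ n * s ^ (2*n^2)) \<le> norm C * (1/2) ^ n"
      by (rule mult_left_mono) simp
    moreover have "norm (C * r ^ n * s ^ (2*n^2)) = norm C * (r ^ n * s ^ (2*n^2))"
      using assms by (simp add: abs_mult abs_of_nonneg mult.assoc)
    ultimately show ?thesis by linarith
  qed
  show ?thesis by (rule summable_comparison_test'[OF S B])
qed

lemma gt_summable:
  fixes q x :: complex
  assumes q: "norm q < 1" and u: "\<And>n. norm (u n) \<le> M" and c: "\<And>n. norm (c n) \<le> \<rho>"
  shows "summable (gt q x u c)"
proof (rule summable_comparison_test)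
  show "\<exists>N. \<forall>n\<ge>N. norm (gt q x u c n) \<le> M * exp (\<rho> / (1 - norm q)) * (norm x / (1 - norm q)) ^ n * norm q ^ (2*n^2)"
    using gt_bound[OF q u c order_refl] by auto
  show "summable (\<lambda>n. M * exp (\<rho> / (1 - norm q)) * (norm x / (1 - norm q)) ^ n * norm q ^ (2*n^2))"
    using q by (intro summable_rs) auto
qed



lemma Qs:
  fixes q b :: complex assumes "norm q < 1" "m' = Suc m"
  shows "qpoch_inf (- b * q ^ m) q = (1 + b * q ^ m) * qpoch_inf (- b * q ^ m') q"
proof -
  have e: "- b * q ^ m * q = - b * q ^ m'" using assms(2) by (simp add: algebra_simps)
  have "qpoch_inf (- b * q ^ m) q = (1 - (- b * q ^ m)) * qpoch_inf (- b * q ^ m * q) q"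
    by (rule Qsplit[OF assms(1)])
  also have "\<dots> = (1 + b*q^m) * qpoch_inf (- b * q ^ m') q" unfolding e by simp
  finally show ?thesis .
qed

lemma qpoch_Suc: "qpoch x q (Suc n) = qpoch x q n * (1 - x * q ^ n)"
  by (simp add: qpoch_def)

lemma powe: "m = k*n + l \<Longrightarrow> (q::complex)^m = q^l * (q^n)^k"
  by (simp add: power_add power_mult[symmetric] mult.commute)

definition kt :: "complex \<Rightarrow> complex \<Rightarrow> nat \<Rightarrow> complex" where
  "kt q b = gt q (b^2*q^2) (\<lambda>n. b*q*((1 - q^(2*n))*(1 + b*q^(2*n+2)*(1+q)) - b^2*q^(4*n+4)*(1-q)))
     (\<lambda>n. - b * q^(2*n+4))"

lemma pw1:
  fixes q a :: complex assumes q: "norm q < 1"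
  shows "gt q (a^2) (\<lambda>n. 1 - q^(2*n)) (\<lambda>n. - a * q^(2*n+2)) (Suc n)
    + (gt q (a^2*q^2) (\<lambda>_. a*q) (\<lambda>n. - a * q^(2*n+2)) n
       - a*q*(1+a*q) * gt q (a^2*q^4) (\<lambda>_. 1) (\<lambda>n. - a * q^(2*n+3)) n) = kt q a n"
proof -
  define y where "y = a^n"
  define z where "z = q^n"
  define Z where "Z = q^(2*n^2)"
  define P1 where "P1 = qpoch q (q^2) n"
  define P2 where "P2 = qpoch (q^2) (q^2) n"
  define R where "R = qpoch_inf (- a * (q^4*z^2)) q"
  have P2nz: "P2 \<noteq> 0" unfolding P2_def by (rule qpoch2_nonzero[OF q])
  have P2S: "qpoch (q^2) (q^2) (Suc n) = P2 * (1 - q^2*z^2)"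
    by (simp add: qpoch_Suc P2_def z_def power_mult[symmetric] power_mult_distrib mult.commute)
  have d: "1 - q^2*z^2 \<noteq> 0"
    using qpoch2_nonzero[OF q, of "Suc n"] P2S by auto
  have P1S: "qpoch q (q^2) (Suc n) = P1 * (1 - q*z^2)"
    by (simp add: qpoch_Suc P1_def z_def power_mult[symmetric] power_mult_distrib mult.commute)
  have e1: "q^(2*(Suc n)^2) = Z * z^4 * q^2"
  proof -
    have "2*(Suc n)^2 = 2*n^2 + 4*n + 2" by (simp add: power2_eq_square algebra_simps)
    then have "q^(2*(Suc n)^2) = q^(2*n^2) * q^(4*n) * q^2" by (simp only: power_add)
    moreover have "q^(4*n) = (q^n)^4" by (simp add: power_mult[symmetric] mult.commute)
    ultimately show ?thesis by (simp add: Z_def z_def)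
  qed
  have e2: "q^(2*Suc n) = q^2 * z^2" unfolding z_def by (rule powe) simp
  have e3: "q^(2*n) = z^2" by (simp add: z_def power_mult power_mult_distrib mult.commute)
  have e4: "q^(2*n+2) = q^2 * z^2" unfolding z_def by (rule powe) simp
  have e5: "q^(4*n+4) = q^4 * z^4" unfolding z_def by (rule powe) simp
  have e6: "(a^2)^(Suc n) = a^2 * y^2" by (simp add: y_def power_mult[symmetric] mult.commute)
  have e7: "(a^2*q^2)^n = y^2 * z^2" by (simp add: y_def z_def power_mult_distrib power_mult[symmetric] mult.commute)
  have e8: "(a^2*q^4)^n = y^2 * z^4" by (simp add: y_def z_def power_mult_distrib power_mult[symmetric] mult.commute)
  have e9: "(a^2)^n = y^2" by (simp add: y_def power_mult[symmetric] mult.commute)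
  have e10: "q^(2*n+3) = q^3 * z^2" unfolding z_def by (rule powe) simp
  have e11: "q^(2*n+4) = q^4 * z^2" unfolding z_def by (rule powe) simp
  have e12: "q^(2*Suc n+2) = q^4 * z^2" unfolding z_def by (rule powe) simp
  have Q3: "qpoch_inf (- a * (q^3*z^2)) q = (1 + a*(q^3*z^2)) * R"
    unfolding R_def e10[symmetric] e11[symmetric] by (rule Qs[OF q]) simp
  have Q2: "qpoch_inf (- a * (q^2*z^2)) q = (1 + a*(q^2*z^2)) * ((1 + a*(q^3*z^2)) * R)"
    unfolding Q3[symmetric] unfolding e4[symmetric] e10[symmetric] by (rule Qs[OF q]) simp
  show ?thesis
    unfolding kt_def gt_def
    apply (simp only: P1S P2S Q2 Q3 e1 e2 e3 e4 e5 e6 e7 e9 e8 e10 e11 e12 flip: P1_def P2_def R_def Z_def)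
    using P2nz d apply (simp add: field_simps)
    apply algebra
    done
qed

definition Xt :: "complex \<Rightarrow> complex \<Rightarrow> nat \<Rightarrow> complex" where
  "Xt q b = gt q (b^2*q^2) (\<lambda>n. b*q*((1 - q^(2*n))*(1 + b*q^(2*n+2)*(1+q)))) (\<lambda>n. - b * q^(2*n+4))"
definition Yt :: "complex \<Rightarrow> complex \<Rightarrow> nat \<Rightarrow> complex" where
  "Yt q b = gt q (b^2*q^2) (\<lambda>n. b*q*(b^2*q^(4*n+4)*(1-q))) (\<lambda>n. - b * q^(2*n+4))"

lemma gt_alt: "gt q x u c n = u n * (x ^ n * q ^ (2*n^2) * qpoch q (q^2) n * qpoch_inf (c n) q / qpoch (q^2) (q^2) n)"
  unfolding gt_def by (simp add: mult_ac)

lemma kt_split: "kt q b n = Xt q b n - Yt q b n"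
  unfolding kt_def Xt_def Yt_def gt_alt by (simp only: right_diff_distrib left_diff_distrib)

lemma pw2:
  fixes q b :: complex assumes q: "norm q < 1"
  shows "Xt q b (Suc n) - Yt q b n = b^2*q^3 * kt q (b*q^2) n"
proof -
  define y where "y = b^n"
  define z where "z = q^n"
  define Z where "Z = q^(2*n^2)"
  define P1 where "P1 = qpoch q (q^2) n"
  define P2 where "P2 = qpoch (q^2) (q^2) n"
  define R where "R = qpoch_inf (- b * (q^6*z^2)) q"
  have P2nz: "P2 \<noteq> 0" unfolding P2_def by (rule qpoch2_nonzero[OF q])
  have P2S: "qpoch (q^2) (q^2) (Suc n) = P2 * (1 - q^2*z^2)"
    by (simp add: qpoch_Suc P2_def z_def power_mult[symmetric] power_mult_distrib mult.commute)
  have d: "1 - q^2*z^2 \<noteq> 0"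
    using qpoch2_nonzero[OF q, of "Suc n"] P2S by auto
  have P1S: "qpoch q (q^2) (Suc n) = P1 * (1 - q*z^2)"
    by (simp add: qpoch_Suc P1_def z_def power_mult[symmetric] power_mult_distrib mult.commute)
  have e1: "q^(2*(Suc n)^2) = Z * z^4 * q^2"
  proof -
    have "2*(Suc n)^2 = 2*n^2 + 4*n + 2" by (simp add: power2_eq_square algebra_simps)
    then have "q^(2*(Suc n)^2) = q^(2*n^2) * q^(4*n) * q^2" by (simp only: power_add)
    moreover have "q^(4*n) = (q^n)^4" by (simp add: power_mult[symmetric] mult.commute)
    ultimately show ?thesis by (simp add: Z_def z_def)
  qed
  have e2: "q^(2*Suc n) = q^2 * z^2" unfolding z_def by (rule powe) simp
  have e3: "q^(2*n) = z^2" by (simp add: z_def power_mult power_mult_distrib mult.commute)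
  have e4: "q^(2*Suc n+2) = q^4 * z^2" unfolding z_def by (rule powe) simp
  have e5: "q^(4*n+4) = q^4 * z^4" unfolding z_def by (rule powe) simp
  have e6: "(b^2*q^2)^(Suc n) = b^2*q^2 * (y^2*z^2)"
    by (simp add: y_def z_def power_mult_distrib power_mult[symmetric] mult.commute)
  have e7: "(b^2*q^2)^n = y^2 * z^2" by (simp add: y_def z_def power_mult_distrib power_mult[symmetric] mult.commute)
  have e8: "((b*q^2)^2*q^2)^n = y^2 * z^6" by (simp add: y_def z_def power_mult_distrib power_mult[symmetric] mult.commute power_add[symmetric])
  have e9: "q^(2*Suc n+4) = q^6 * z^2" unfolding z_def by (rule powe) simp
  have e10: "q^(2*n+4) = q^4 * z^2" unfolding z_def by (rule powe) simp
  have e11: "q^(2*n+5) = q^5 * z^2" unfolding z_def by (rule powe) simp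
  have e12: "- (b*q^2) * (q^4*z^2) = - b * (q^6*z^2)" by algebra
  have e13: "q^(2*n+2) = q^2 * z^2" unfolding z_def by (rule powe) simp
  have Q5: "qpoch_inf (- b * (q^5*z^2)) q = (1 + b*(q^5*z^2)) * R"
    unfolding R_def e11[symmetric] e9[symmetric] by (rule Qs[OF q]) simp
  have Q4: "qpoch_inf (- b * (q^4*z^2)) q = (1 + b*(q^4*z^2)) * ((1 + b*(q^5*z^2)) * R)"
    unfolding Q5[symmetric] unfolding e10[symmetric] e11[symmetric] by (rule Qs[OF q]) simp
  show ?thesis
    unfolding kt_def Xt_def Yt_def gt_def
    apply (simp only: P1S P2S e1 e2 e3 e4 e5 e6 e7 e8 e9 e10 e12 e13 flip: P1_def P2_def Z_def)
    apply (simp only: Q4 flip: R_def)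
    using P2nz d apply (simp add: field_simps)
    apply algebra
    done
qed




lemma qlim1: assumes "norm (q::complex) < 1" "k > 0" shows "(\<lambda>n. q^(k*n+l)) \<longlonglongrightarrow> 0"
proof -
  have "norm (q^k) < 1" using assms by (simp add: norm_power power_less_one_iff)
  then have "(\<lambda>n. q^l * (q^k)^n) \<longlonglongrightarrow> q^l * 0"
    by (intro tendsto_mult tendsto_const LIMSEQ_power_zero)
  moreover have "\<And>n. q^(k*n+l) = q^l * (q^k)^n" by (rule powe) simp
  ultimately show ?thesis by simp
qed

lemma qlim2: assumes "norm (q::complex) < 1" "k > 0" shows "(\<lambda>n. q^(k*n)) \<longlonglongrightarrow> 0"
  using qlim1[OF assms, of 0] by simp

lemma gt_summable':
  fixes q x :: complex
  assumes q: "norm q < 1" and u: "convergent u" and c: "\<And>n. norm (c n) \<le> \<rho>"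
  shows "summable (gt q x u c)"
proof -
  from convergent_imp_Bseq[OF u] obtain K where "\<forall>n. norm (u n) \<le> K" by (auto elim: BseqE)
  then show ?thesis by (intro gt_summable[OF q _ c]) auto
qed

lemma cb: assumes "norm (q::complex) < 1" shows "norm (- a * q ^ k) \<le> norm a"
proof -
  have "norm (q^k) \<le> 1" using assms by (simp add: norm_power power_le_one)
  then show ?thesis by (simp add: norm_mult mult_left_le)
qed

lemma cb': assumes "norm (q::complex) < 1" shows "\<And>n. norm (- a * q ^ (f n)) \<le> norm a"
  using cb[OF assms] by blast

lemma F3_gt: "F3 q a = suminf (gt q (a^2) (\<lambda>_. 1) (\<lambda>n. - a * q^(2*n+1)))"
  unfolding F3_def gt_def by (simp add: power_mult)

lemma F1_gt: "F1 q a = suminf (gt q (a^2*q^2) (\<lambda>_. 1) (\<lambda>n. - a * q^(2*n+2)))"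
proof -
  have "a ^ (2*n) * q ^ (2*n*(n+1)) = (a^2*q^2)^n * q^(2*n^2)" for n
  proof -
    have "2*n*(n+1) = 2*n + 2*n^2" by (simp add: power2_eq_square algebra_simps)
    then have "q ^ (2*n*(n+1)) = q^(2*n) * q^(2*n^2)" by (simp only: power_add)
    moreover have "(a^2*q^2)^n = a^(2*n) * q^(2*n)" by (simp add: power_mult_distrib power_mult)
    ultimately show ?thesis by (simp add: mult_ac)
  qed
  then show ?thesis unfolding F1_def gt_def by simp
qed

lemma F1q_gt: "F1 q (a*q) = suminf (gt q (a^2*q^4) (\<lambda>_. 1) (\<lambda>n. - a * q^(2*n+3)))"
proof -
  have "q * q^(2*n+2) = q^(2*n+3)" for n
  proof -
    have h1: "q^(2*n+3) = q^3*(q^n)^2" by (rule powe) simp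
    have h2: "q^(2*n+2) = q^2*(q^n)^2" by (rule powe) simp
    show ?thesis by (simp only: h1 h2) algebra
  qed
  then have "(\<lambda>n. - (a*q) * q^(2*n+2)) = (\<lambda>n. - a * q^(2*n+3))" by (simp add: mult.assoc)
  moreover have "(a*q)^2*q^2 = a^2*q^4" by algebra
  ultimately show ?thesis using F1_gt[of q "a*q"] by simp
qed

lemma pw0:
  fixes q a :: complex assumes q: "norm q < 1"
  shows "gt q (a^2) (\<lambda>_. 1) (\<lambda>n. - a * q^(2*n+1)) n - gt q (a^2*q^2) (\<lambda>_. 1) (\<lambda>n. - a * q^(2*n+2)) n
     - a*q*(1+a*q) * gt q (a^2*q^4) (\<lambda>_. 1) (\<lambda>n. - a * q^(2*n+3)) n
   = gt q (a^2) (\<lambda>n. 1 - q^(2*n)) (\<lambda>n. - a * q^(2*n+2)) n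
    + (gt q (a^2*q^2) (\<lambda>_. a*q) (\<lambda>n. - a * q^(2*n+2)) n
       - a*q*(1+a*q) * gt q (a^2*q^4) (\<lambda>_. 1) (\<lambda>n. - a * q^(2*n+3)) n)"
proof -
  define y where "y = a^n"
  define z where "z = q^n"
  define P2 where "P2 = qpoch (q^2) (q^2) n"
  define R where "R = qpoch_inf (- a * (q^2*z^2)) q"
  have P2nz: "P2 \<noteq> 0" unfolding P2_def by (rule qpoch2_nonzero[OF q])
  have e1: "q^(2*n+1) = q^1 * z^2" unfolding z_def by (rule powe) simp
  have e2: "q^(2*n+2) = q^2 * z^2" unfolding z_def by (rule powe) simp
  have e3: "q^(2*n) = z^2" by (simp add: z_def power_mult mult.commute)
  have e7: "(a^2*q^2)^n = y^2 * z^2" by (simp add: y_def z_def power_mult_distrib power_mult[symmetric] mult.commute)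
  have e9: "(a^2)^n = y^2" by (simp add: y_def power_mult[symmetric] mult.commute)
  have Q1: "qpoch_inf (- a * (q^1*z^2)) q = (1 + a*(q^1*z^2)) * R"
    unfolding R_def e1[symmetric] e2[symmetric] by (rule Qs[OF q]) simp
  show ?thesis
    unfolding gt_def
    apply (simp only: Q1 e1 e2 e3 e7 e9 flip: P2_def R_def)
    using P2nz apply (simp add: field_simps)
    done
qed

lemma identI:
  fixes q a :: complex assumes q: "norm q < 1"
  shows "F3 q a - F1 q a - a*q*(1+a*q) * F1 q (a*q) = suminf (kt q a)"
proof -
  define f3 where "f3 = gt q (a^2) (\<lambda>_. 1) (\<lambda>n. - a * q^(2*n+1))"
  define f1 where "f1 = gt q (a^2*q^2) (\<lambda>_. 1) (\<lambda>n. - a * q^(2*n+2))"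
  define g where "g = gt q (a^2*q^4) (\<lambda>_. 1) (\<lambda>n. - a * q^(2*n+3))"
  define A where "A = gt q (a^2) (\<lambda>n. 1 - q^(2*n)) (\<lambda>n. - a * q^(2*n+2))"
  define B where "B = gt q (a^2*q^2) (\<lambda>_. a*q) (\<lambda>n. - a * q^(2*n+2))"
  define c where "c = a*q*(1+a*q)"
  have s3: "summable f3" unfolding f3_def by (rule gt_summable'[OF q convergent_const cb'[OF q]])
  have s1: "summable f1" unfolding f1_def by (rule gt_summable'[OF q convergent_const cb'[OF q]])
  have sg: "summable g" unfolding g_def by (rule gt_summable'[OF q convergent_const cb'[OF q]])
  have sB: "summable B" unfolding B_def by (rule gt_summable'[OF q convergent_const cb'[OF q]])
  have sA: "summable A" unfolding A_def
  proof (rule gt_summable'[OF q _ cb'[OF q]])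
    show "convergent (\<lambda>n. 1 - q^(2*n))"
    proof -
      have "(\<lambda>n. 1 - q^(2*n)) \<longlonglongrightarrow> 1 - 0" by (intro tendsto_diff tendsto_const qlim2[OF q]) auto
      then show ?thesis by (rule convergentI)
    qed
  qed
  have sD: "summable (\<lambda>n. B n - c * g n)" by (intro summable_diff summable_mult sB sg)
  have A0: "A 0 = 0" unfolding A_def gt_def by simp
  have "F3 q a - F1 q a - c * F1 q (a*q) = suminf f3 - suminf f1 - c * suminf g"
    unfolding F1q_gt unfolding F3_gt F1_gt f3_def f1_def g_def ..
  also have "\<dots> = (\<Sum>n. f3 n - f1 n - c * g n)"
    using suminf_diff[OF s3 s1] suminf_mult[OF sg, of c]
      suminf_diff[OF summable_diff[OF s3 s1] summable_mult[OF sg, of c]] by simp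
  also have "\<dots> = (\<Sum>n. A n + (B n - c * g n))"
    unfolding f3_def f1_def g_def A_def B_def c_def by (intro suminf_cong pw0[OF q])
  also have "\<dots> = suminf A + (\<Sum>n. B n - c * g n)"
    using sA sD by (simp add: suminf_add)
  also have "suminf A = (\<Sum>n. A (Suc n))" using suminf_split_head[OF sA] A0 by simp
  also have "(\<Sum>n. A (Suc n)) + (\<Sum>n. B n - c * g n) = (\<Sum>n. A (Suc n) + (B n - c * g n))"
    using sA sD by (intro suminf_add) (auto simp: summable_Suc_iff)
  also have "\<dots> = suminf (kt q a)"
    unfolding A_def B_def g_def c_def by (intro suminf_cong pw1[OF q])
  finally show ?thesis unfolding c_def .
qed




lemma kt_summable: assumes q: "norm q < 1" shows "summable (kt q b)"
  unfolding kt_def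
proof (rule gt_summable'[OF q _ cb'[OF q]])
  show "convergent (\<lambda>n. b*q*((1 - q^(2*n))*(1 + b*q^(2*n+2)*(1+q)) - b^2*q^(4*n+4)*(1-q)))"
    apply (rule convergentI[where L="b*q*((1 - 0)*(1 + b*0*(1+q)) - b^2*0*(1-q))"])
    apply (intro tendsto_mult tendsto_diff tendsto_add tendsto_const qlim1[OF q] qlim2[OF q])
    apply auto
    done
qed

lemma Xt_summable: assumes q: "norm q < 1" shows "summable (Xt q b)"
  unfolding Xt_def
proof (rule gt_summable'[OF q _ cb'[OF q]])
  show "convergent (\<lambda>n. b*q*((1 - q^(2*n))*(1 + b*q^(2*n+2)*(1+q))))"
    apply (rule convergentI[where L="b*q*((1 - 0)*(1 + b*0*(1+q)))"])
    apply (intro tendsto_mult tendsto_diff tendsto_add tendsto_const qlim1[OF q] qlim2[OF q])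
    apply auto
    done
qed

lemma Yt_summable: assumes q: "norm q < 1" shows "summable (Yt q b)"
  unfolding Yt_def
proof (rule gt_summable'[OF q _ cb'[OF q]])
  show "convergent (\<lambda>n. b*q*(b^2*q^(4*n+4)*(1-q)))"
    apply (rule convergentI[where L="b*q*(b^2*0*(1-q))"])
    apply (intro tendsto_mult tendsto_diff tendsto_add tendsto_const qlim1[OF q] qlim2[OF q])
    apply auto
    done
qed

lemma Kfun: assumes q: "norm q < 1"
  shows "suminf (kt q b) = b^2*q^3 * suminf (kt q (b*q^2))"
proof -
  have sX: "summable (Xt q b)" and sY: "summable (Yt q b)" using Xt_summable[OF q] Yt_summable[OF q] by auto
  have X0: "Xt q b 0 = 0" unfolding Xt_def gt_def by simp
  have "suminf (kt q b) = (\<Sum>n. Xt q b n - Yt q b n)" by (intro suminf_cong kt_split)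
  also have "\<dots> = suminf (Xt q b) - suminf (Yt q b)" by (rule suminf_diff[OF sX sY, symmetric])
  also have "suminf (Xt q b) = (\<Sum>n. Xt q b (Suc n))" using suminf_split_head[OF sX] X0 by simp
  also have "(\<Sum>n. Xt q b (Suc n)) - suminf (Yt q b) = (\<Sum>n. Xt q b (Suc n) - Yt q b n)"
    using sX sY by (intro suminf_diff) (auto simp: summable_Suc_iff)
  also have "\<dots> = (\<Sum>n. b^2*q^3 * kt q (b*q^2) n)" by (intro suminf_cong pw2[OF q])
  also have "\<dots> = b^2*q^3 * suminf (kt q (b*q^2))" by (rule suminf_mult[OF kt_summable[OF q]])
  finally show ?thesis .
qed

lemma u_bound:
  fixes q b :: complex assumes q: "norm q < 1" and b: "norm b \<le> 1"
  shows "norm (b*q*((1 - q^(2*n))*(1 + b*q^(2*n+2)*(1+q)) - b^2*q^(4*n+4)*(1-q))) \<le> 8"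
proof -
  have qk: "norm (q^k) \<le> 1" for k using q by (simp add: norm_power power_le_one)
  have q1: "norm q \<le> 1" using q by simp
  have n1: "norm (1 + q) \<le> 2" using norm_triangle_ineq[of 1 q] q1 by simp
  have n2: "norm (1 - q) \<le> 2" using norm_triangle_ineq4[of 1 q] q1 by simp
  have n3: "norm (1 - q^(2*n)) \<le> 2" using norm_triangle_ineq4[of 1 "q^(2*n)"] qk[of "2*n"] by simp
  have t1: "norm (b*q^(2*n+2)*(1+q)) \<le> 2"
  proof -
    have "norm b * norm (q^(2*n+2)) * norm (1+q) \<le> 1 * 1 * 2"
      by (intro mult_mono b qk n1) auto
    then show ?thesis by (simp add: norm_mult)
  qed
  have t2: "norm (1 + b*q^(2*n+2)*(1+q)) \<le> 3"
    using norm_triangle_ineq[of 1 "b*q^(2*n+2)*(1+q)"] t1 by simp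
  have t3: "norm ((1 - q^(2*n))*(1 + b*q^(2*n+2)*(1+q))) \<le> 6"
  proof -
    have "norm (1 - q^(2*n)) * norm (1 + b*q^(2*n+2)*(1+q)) \<le> 2 * 3"
      by (intro mult_mono n3 t2) auto
    then show ?thesis by (simp add: norm_mult)
  qed
  have t4: "norm (b^2*q^(4*n+4)*(1-q)) \<le> 2"
  proof -
    have "norm b ^ 2 * norm (q^(4*n+4)) * norm (1-q) \<le> 1 * 1 * 2"
      using b by (intro mult_mono qk n2 power_le_one) auto
    then show ?thesis by (simp add: norm_mult norm_power)
  qed
  have t5: "norm ((1 - q^(2*n))*(1 + b*q^(2*n+2)*(1+q)) - b^2*q^(4*n+4)*(1-q)) \<le> 8"
    using norm_triangle_ineq4[of "(1 - q^(2*n))*(1 + b*q^(2*n+2)*(1+q))" "b^2*q^(4*n+4)*(1-q)"] t3 t4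
    by simp
  have "norm b * norm q * norm ((1 - q^(2*n))*(1 + b*q^(2*n+2)*(1+q)) - b^2*q^(4*n+4)*(1-q)) \<le> 1 * 1 * 8"
    by (intro mult_mono b q1 t5) auto
  then show ?thesis by (simp add: norm_mult)
qed

lemma Kbound: assumes q: "norm q < 1"
  shows "\<exists>B\<ge>0. \<forall>b. norm b \<le> 1 \<longrightarrow> norm (suminf (kt q b)) \<le> B"
proof -
  define bnd where "bnd = (\<lambda>n. 8 * exp (1 / (1 - norm q)) * (1 / (1 - norm q)) ^ n * norm q ^ (2*n^2))"
  have sb: "summable bnd" unfolding bnd_def using q by (intro summable_rs) auto
  have B0: "0 \<le> suminf bnd"
    using q by (intro suminf_nonneg sb) (auto simp: bnd_def)
  have "norm (suminf (kt q b)) \<le> suminf bnd" if b: "norm b \<le> 1" for b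
  proof -
    have x: "norm (b^2*q^2) \<le> 1"
    proof -
      have "norm b ^ 2 * norm q ^ 2 \<le> 1 * 1" using b q by (intro mult_mono power_le_one) auto
      then show ?thesis by (simp add: norm_mult norm_power)
    qed
    have c: "norm (- b * q^(2*n+4)) \<le> 1" for n using cb[OF q, of b "2*n+4"] b by linarith
    have kb: "norm (kt q b n) \<le> bnd n" for n
      unfolding kt_def bnd_def by (rule gt_bound[OF q u_bound[OF q b] c x])
    have sn: "summable (\<lambda>n. norm (kt q b n))"
      by (rule summable_comparison_test[OF _ sb]) (use kb in auto)
    have "norm (suminf (kt q b)) \<le> (\<Sum>n. norm (kt q b n))" by (rule summable_norm[OF sn])
    also have "\<dots> \<le> suminf bnd" by (rule suminf_le[OF kb sn sb])
    finally show ?thesis .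
  qed
  with B0 show ?thesis by blast
qed

lemma K0: assumes q: "norm q < 1" shows "suminf (kt q a) = 0"
proof -
  define K where "K = (\<lambda>b. suminf (kt q b))"
  obtain B where B0: "B \<ge> 0" and B: "\<And>b. norm b \<le> 1 \<Longrightarrow> norm (K b) \<le> B"
    using Kbound[OF q] unfolding K_def by blast
  have KK: "K b = b^2*q^3 * K (b*q^2)" for b unfolding K_def by (rule Kfun[OF q])
  have q1: "norm q \<le> 1" using q by simp
  have c1: "norm (K b) \<le> B * (1/2)^j" if "norm b \<le> 1/2" for j b
    using that
  proof (induction j arbitrary: b)
    case 0
    then show ?case using B[of b] by simp
  next
    case (Suc j)
    have nb: "norm (b*q^2) \<le> 1/2"
    proof -
      have "norm b * norm q ^ 2 \<le> 1/2 * 1" using Suc.prems q1 by (intro mult_mono power_le_one) auto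
      then show ?thesis by (simp add: norm_mult norm_power)
    qed
    have "norm (K b) = norm b ^ 2 * norm q ^ 3 * norm (K (b*q^2))"
      by (subst KK) (simp add: norm_mult norm_power)
    also have "\<dots> \<le> (1/2)^2 * 1 * (B * (1/2)^j)"
      using Suc.prems q1 Suc.IH[OF nb] by (intro mult_mono power_mono power_le_one) auto
    also have "\<dots> \<le> B * (1/2)^(Suc j)"
    proof -
      have X: "0 \<le> B * (1/2::real)^j" using B0 by simp
      have e1: "(1/2::real)^2 * 1 * (B * (1/2)^j) = (B * (1/2)^j) / 4" by (simp add: power2_eq_square)
      have e2: "B * (1/2::real)^(Suc j) = (B * (1/2)^j) / 2" by simp
      show ?thesis unfolding e1 e2 using X by linarith
    qed
    finally show ?case .
  qed
  have c2: "K b = 0" if "norm b \<le> 1/2" for b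
  proof -
    have "(\<lambda>j. B * (1/2::real)^j) \<longlonglongrightarrow> B * 0"
      by (intro tendsto_mult tendsto_const LIMSEQ_power_zero) auto
    then have "norm (K b) \<le> B * 0"
      by (rule LIMSEQ_le_const) (use c1[OF that] in auto)
    then show ?thesis by simp
  qed
  have c3: "K b = 0" if "norm (b * q^(2*k)) \<le> 1/2" for k b
    using that
  proof (induction k arbitrary: b)
    case 0
    then show ?case using c2 by simp
  next
    case (Suc k)
    have "b * q^(2*Suc k) = (b*q^2) * q^(2*k)" by (simp add: power_add mult_ac power2_eq_square)
    then have "norm ((b*q^2) * q^(2*k)) \<le> 1/2" using Suc.prems by (simp only:)
    then have "K (b*q^2) = 0" by (rule Suc.IH)
    then show ?case using KK[of b] by simp
  qed
  have "(\<lambda>k. a * q^(2*k)) \<longlonglongrightarrow> a * 0"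
    by (intro tendsto_mult tendsto_const qlim2[OF q]) auto
  then have "(\<lambda>k. norm (a * q^(2*k))) \<longlonglongrightarrow> norm (a * 0)" by (rule tendsto_norm)
  then have "eventually (\<lambda>k. norm (a * q^(2*k)) < 1/2) sequentially"
    by (rule order_tendstoD) simp
  then obtain k where "norm (a * q^(2*k)) < 1/2" by (auto simp: eventually_sequentially)
  then have "K a = 0" using c3[of a k] by simp
  then show ?thesis unfolding K_def .
qed

theorem lemma9:
  fixes q a :: complex
  assumes "norm q < 1"
  shows "F1 q a = F3 q (a * q) \<and>
         F2 q a = (1 + a * q) * F2 q (a * q) \<and>
         F3 q a = F1 q a + a * q * (1 + a * q) * F1 q (a * q)"
proof (intro conjI)
  have q: "norm q < 1" by fact
  show "F1 q a = F3 q (a * q)"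
  proof -
    have "q * q^(2*n+1) = q^(2*n+2)" for n
    proof -
      have h1: "q^(2*n+1) = q^1*(q^n)^2" by (rule powe) simp
      have h2: "q^(2*n+2) = q^2*(q^n)^2" by (rule powe) simp
      show ?thesis by (simp only: h1 h2) algebra
    qed
    then have "(\<lambda>n. - (a*q) * q^(2*n+1)) = (\<lambda>n. - a * q^(2*n+2))" by (simp add: mult.assoc)
    moreover have "(a*q)^2 = a^2*q^2" by algebra
    ultimately show ?thesis unfolding F1_gt F3_gt by simp
  qed
  show "F2 q a = (1 + a * q) * F2 q (a * q)"
    unfolding F2_def using Qsplit[OF q, of "- a * q"] by simp
  show "F3 q a = F1 q a + a * q * (1 + a * q) * F1 q (a * q)"
    using identI[OF q, of a] K0[OF q, of a] by (metis diff_diff_eq eq_iff_diff_eq_0)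
qed


end
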